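(* Let $V$ be a Majorana algebra with a generating set $A$ of Majorana axes. Suppose $a_0, a_1 \in A$ satisfy $\tau(a_0) = 1$ and the subalgebra $U = \langle\langle a_0, a_1\rangle\rangle$ generated by $a_0$ and $a_1$ is of type $2A$, with third basis vector $a_\rho$. Then $a_\rho$ satisfies axioms M3–M7.
   Context: Let $V$ be a real vector space with a positive definite symmetric bilinear form $(\,,\,)$ and a bilinear commutative (non-associative) product $\cdot$ such that (M1) $(u, v\cdot w) = (u\cdot v, w)$ for all $u,v,w\in V$, and (M2) $(u\cdot u, v\cdot v)\ge (u\cdot v, u\cdot v)$ for all $u,v \in V$. For $a \in V$ and $\mu \in \mathbb{R}$ write $V_\mu^{(a)} = \{v \in V : a\cdot v = \mu v\}$. A nonzero $a\in V$ is said to satisfy axioms M3–M7 if: (M3) $(a,a)=1$ and $a\cdot a = a$; (M4) $V = V_1^{(a)}\oplus V_0^{(a)}\oplus V_{1/4}^{(a)} \oplus V_{1/32}^{(a)}$; (M5) $V_1^{(a)} = \mathbb{R}a$; (M6) the linear map $\tau(a)$ of $V$ acting as $+1$ on $V_1^{(a)}\oplus V_0^{(a)}\oplus V_{1/4}^{(a)}$ and as $-1$ on $V_{1/32}^{(a)}$ preserves the algebra product; (M7) on $V_+^{(a)} := V_1^{(a)}\oplus V_0^{(a)}\oplus V_{1/4}^{(a)}$, the linear map $\sigma(a)$ acting as $+1$ on $V_1^{(a)}\oplus V_0^{(a)}$ and as $-1$ on $V_{1/4}^{(a)}$ preserves the restriction of the algebra product to $V_+^{(a)}$. Elements satisfying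 M3–M7 are called Majorana axes. A Majorana algebra is such a $V$ (satisfying M1, M2) generated as an algebra by a set $A$ of Majorana axes. The subalgebra $\langle\langle a_0,a_1\rangle\rangle$ generated by two Majorana axes is of type $2A$ if it is $3$-dimensional with basis $a_0, a_1, a_\rho$ (the "third basis vector") where $a_\rho\cdot a_\rho = a_\rho$, $a_0\cdot a_1 = \frac{1}{8}(a_0+a_1-a_\rho)$, $a_0\cdot a_\rho = \frac18(a_0+a_\rho-a_1)$, $a_1\cdot a_\rho = \frac18(a_1+a_\rho-a_0)$, and $(a_0,a_1)=(a_0,a_\rho)=(a_1,a_\rho)=\frac18$. *)

theory Defs
  imports "HOL-Analysis.Analysis"
begin

definition eigsp :: "('v::real_vector \<Rightarrow> 'v \<Rightarrow> 'v) \<Rightarrow> 'v \<Rightarrow> real \<Rightarrow> 'v set" where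
  "eigsp pr a \<mu> = {v. pr a v = \<mu> *\<^sub>R v}"

definition Vplus :: "('v::real_vector \<Rightarrow> 'v \<Rightarrow> 'v) \<Rightarrow> 'v \<Rightarrow> 'v set" where
  "Vplus pr a = {x + y + z | x y z. x \<in> eigsp pr a 1 \<and> y \<in> eigsp pr a 0 \<and> z \<in> eigsp pr a (1/4)}"

text \<open>tau(a): +1 on V_+^(a), -1 on V_{1/32}^(a) (well defined under M4).\<close>
definition tau_map :: "('v::real_vector \<Rightarrow> 'v \<Rightarrow> 'v) \<Rightarrow> 'v \<Rightarrow> 'v \<Rightarrow> 'v" where
  "tau_map pr a v = (THE w. \<exists>p m. p \<in> Vplus pr a \<and> m \<in> eigsp pr a (1/32) \<and> v = p + m \<and> w = p - m)"

definition sigma_map :: "('v::real_vector \<Rightarrow> 'v \<Rightarrow> 'v) \<Rightarrow> 'v \<Rightarrow> 'v \<Rightarrow> 'v" where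
  "sigma_map pr a v = (THE w. \<exists>p q. p \<in> {x + y | x y. x \<in> eigsp pr a 1 \<and> y \<in> eigsp pr a 0}
      \<and> q \<in> eigsp pr a (1/4) \<and> v = p + q \<and> w = p - q)"

definition majorana_axis :: "('v::real_vector \<Rightarrow> 'v \<Rightarrow> real) \<Rightarrow> ('v \<Rightarrow> 'v \<Rightarrow> 'v) \<Rightarrow> 'v \<Rightarrow> bool" where
  "majorana_axis ip pr a \<longleftrightarrow>
     a \<noteq> 0 \<and>
     \<comment> \<open>M3\<close>
     ip a a = 1 \<and> pr a a = a \<and>
     \<comment> \<open>M4: V is the direct sum of the four eigenspaces\<close>
     (\<forall>v. \<exists>!(v1, v0, v4, v32). v1 \<in> eigsp pr a 1 \<and> v0 \<in> eigsp pr a 0 \<and>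
            v4 \<in> eigsp pr a (1/4) \<and> v32 \<in> eigsp pr a (1/32) \<and> v = v1 + v0 + v4 + v32) \<and>
     \<comment> \<open>M5\<close>
     eigsp pr a 1 = range (\<lambda>c. c *\<^sub>R a) \<and>
     \<comment> \<open>M6\<close>
     (\<forall>u v. tau_map pr a (pr u v) = pr (tau_map pr a u) (tau_map pr a v)) \<and>
     \<comment> \<open>M7\<close>
     (\<forall>u\<in>Vplus pr a. \<forall>v\<in>Vplus pr a.
        sigma_map pr a (pr u v) = pr (sigma_map pr a u) (sigma_map pr a v))"

definition alg_gen :: "('v::real_vector \<Rightarrow> 'v \<Rightarrow> 'v) \<Rightarrow> 'v set \<Rightarrow> 'v set" where
  "alg_gen pr S = \<Inter>{W. subspace W \<and> S \<subseteq> W \<and> (\<forall>x\<in>W. \<forall>y\<in>W. pr x y \<in> W)}"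

definition majorana_space :: "('v::real_vector \<Rightarrow> 'v \<Rightarrow> real) \<Rightarrow> ('v \<Rightarrow> 'v \<Rightarrow> 'v) \<Rightarrow> bool" where
  "majorana_space ip pr \<longleftrightarrow>
     bilinear ip \<and> (\<forall>u v. ip u v = ip v u) \<and> (\<forall>v. v \<noteq> 0 \<longrightarrow> ip v v > 0) \<and>
     bilinear pr \<and> (\<forall>u v. pr u v = pr v u) \<and>
     (\<forall>u v w. ip u (pr v w) = ip (pr u v) w) \<and>
     (\<forall>u v. ip (pr u u) (pr v v) \<ge> ip (pr u v) (pr u v))"

definition majorana_algebra :: "('v::real_vector \<Rightarrow> 'v \<Rightarrow> real) \<Rightarrow> ('v \<Rightarrow> 'v \<Rightarrow> 'v) \<Rightarrow> 'v set \<Rightarrow> bool" where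
  "majorana_algebra ip pr A \<longleftrightarrow>
     majorana_space ip pr \<and> (\<forall>a\<in>A. majorana_axis ip pr a) \<and> alg_gen pr A = UNIV"

definition type_2A :: "('v::real_vector \<Rightarrow> 'v \<Rightarrow> real) \<Rightarrow> ('v \<Rightarrow> 'v \<Rightarrow> 'v) \<Rightarrow> 'v \<Rightarrow> 'v \<Rightarrow> 'v \<Rightarrow> bool" where
  "type_2A ip pr a0 a1 ar \<longleftrightarrow>
     card {a0, a1, ar} = 3 \<and> independent {a0, a1, ar} \<and>
     alg_gen pr {a0, a1} = span {a0, a1, ar} \<and>
     pr ar ar = ar \<and>
     pr a0 a1 = (1/8) *\<^sub>R (a0 + a1 - ar) \<and>
     pr a0 ar = (1/8) *\<^sub>R (a0 + ar - a1) \<and>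
     pr a1 ar = (1/8) *\<^sub>R (a1 + ar - a0) \<and>
     ip a0 a1 = 1/8 \<and> ip a0 ar = 1/8 \<and> ip a1 ar = 1/8"

end

theory Submission imports Defs begin

definition M4 :: "('v::real_vector \<Rightarrow> 'v \<Rightarrow> 'v) \<Rightarrow> 'v \<Rightarrow> bool" where
 "M4 pr a \<longleftrightarrow> (\<forall>v. \<exists>!(v1, v0, v4, v32). v1 \<in> eigsp pr a 1 \<and> v0 \<in> eigsp pr a 0 \<and>
            v4 \<in> eigsp pr a (1/4) \<and> v32 \<in> eigsp pr a (1/32) \<and> v = v1 + v0 + v4 + v32)"

lemma m4_unique:
  assumes "M4 pr a"
   and "x \<in> eigsp pr a 1" "y \<in> eigsp pr a 0" "z \<in> eigsp pr a (1/4)" "m \<in> eigsp pr a (1/32)"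
   and "x' \<in> eigsp pr a 1" "y' \<in> eigsp pr a 0" "z' \<in> eigsp pr a (1/4)" "m' \<in> eigsp pr a (1/32)"
   and "x + y + z + m = x' + y' + z' + m'"
  shows "x = x' \<and> y = y' \<and> z = z' \<and> m = m'"
proof -
  from assms(1)[unfolded M4_def, rule_format, of "x+y+z+m"] have "\<exists>!(v1, v0, v4, v32). v1 \<in> eigsp pr a 1 \<and> v0 \<in> eigsp pr a 0 \<and>
            v4 \<in> eigsp pr a (1/4) \<and> v32 \<in> eigsp pr a (1/32) \<and> x + y + z + m = v1 + v0 + v4 + v32"
    (is "Ex1 ?P") .
  note ex = this
  have "?P (x,y,z,m)"
    using assms(2-5) by simp
  with ex have 1: "(THE t. ?P t) = (x,y,z,m)" by (rule the1_equality)
  have "?P (x',y',z',m')"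
    using assms(6-10) by simp
  with ex have 2: "(THE t. ?P t) = (x',y',z',m')" by (rule the1_equality)
  from 1 2 have "(x,y,z,m) = (x',y',z',m')" by simp
  then show ?thesis by simp
qed

lemma zero_eig: "bilinear pr \<Longrightarrow> 0 \<in> eigsp pr a \<mu>"
  by (simp add: eigsp_def bilinear_rzero)

lemma tau_char:
  assumes "M4 pr a" "bilinear pr"
   and "x \<in> eigsp pr a 1" "y \<in> eigsp pr a 0" "z \<in> eigsp pr a (1/4)" "m \<in> eigsp pr a (1/32)"
  shows "tau_map pr a (x + y + z + m) = x + y + z - m"
  unfolding tau_map_def
proof (rule the_equality)
  show "\<exists>p ma. p \<in> Vplus pr a \<and> ma \<in> eigsp pr a (1 / 32) \<and> x + y + z + m = p + ma \<and> x + y + z - m = p - ma"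
    using assms by (auto simp: Vplus_def)
next
  fix w assume "\<exists>p ma. p \<in> Vplus pr a \<and> ma \<in> eigsp pr a (1 / 32) \<and> x + y + z + m = p + ma \<and> w = p - ma"
  then obtain x' y' z' m' where h: "x' \<in> eigsp pr a 1" "y' \<in> eigsp pr a 0" "z' \<in> eigsp pr a (1/4)" "m' \<in> eigsp pr a (1/32)"
     "x + y + z + m = x' + y' + z' + m'" "w = x' + y' + z' - m'"
    unfolding Vplus_def by auto
  from m4_unique[OF assms(1,3-6) h(1-5)] h(6) show "w = x + y + z - m" by simp
qed

lemma sigma_char:
  assumes "M4 pr a" "bilinear pr"
   and "x \<in> eigsp pr a 1" "y \<in> eigsp pr a 0" "z \<in> eigsp pr a (1/4)"
  shows "sigma_map pr a (x + y + z) = x + y - z"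
  unfolding sigma_map_def
proof (rule the_equality)
  show "\<exists>p q. p \<in> {x + y |x y. x \<in> eigsp pr a 1 \<and> y \<in> eigsp pr a 0} \<and> q \<in> eigsp pr a (1 / 4) \<and> x + y + z = p + q \<and> x + y - z = p - q"
    using assms by auto
next
  fix w assume "\<exists>p q. p \<in> {x + y |x y. x \<in> eigsp pr a 1 \<and> y \<in> eigsp pr a 0} \<and> q \<in> eigsp pr a (1 / 4) \<and> x + y + z = p + q \<and> w = p - q"
  then obtain x' y' z' where h: "x' \<in> eigsp pr a 1" "y' \<in> eigsp pr a 0" "z' \<in> eigsp pr a (1/4)"
     "x + y + z + 0 = x' + y' + z' + 0" "w = x' + y' - z'"
    by auto
  have z: "0 \<in> eigsp pr a (1/32)" using zero_eig[OF assms(2)] .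
  from m4_unique[OF assms(1,3-5) z h(1-3) z h(4)] h(5) show "w = x + y - z" by simp
qed


lemma majorana_axis_iff:
  "majorana_axis ip pr a \<longleftrightarrow> a \<noteq> 0 \<and> ip a a = 1 \<and> pr a a = a \<and> M4 pr a \<and>
     eigsp pr a 1 = range (\<lambda>c. c *\<^sub>R a) \<and>
     (\<forall>u v. tau_map pr a (pr u v) = pr (tau_map pr a u) (tau_map pr a v)) \<and>
     (\<forall>u\<in>Vplus pr a. \<forall>v\<in>Vplus pr a.
        sigma_map pr a (pr u v) = pr (sigma_map pr a u) (sigma_map pr a v))"
  by (simp only: majorana_axis_def M4_def)

lemma m4_exists:
  assumes "M4 pr a"
  obtains x y z m where "x \<in> eigsp pr a 1" "y \<in> eigsp pr a 0" "z \<in> eigsp pr a (1/4)"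
    "m \<in> eigsp pr a (1/32)" "v = x + y + z + m"
proof -
  from assms[unfolded M4_def, rule_format, of v] have "\<exists>!(v1, v0, v4, v32). v1 \<in> eigsp pr a 1 \<and> v0 \<in> eigsp pr a 0 \<and>
            v4 \<in> eigsp pr a (1/4) \<and> v32 \<in> eigsp pr a (1/32) \<and> v = v1 + v0 + v4 + v32" .
  then have "\<exists>t. (\<lambda>(v1, v0, v4, v32). v1 \<in> eigsp pr a 1 \<and> v0 \<in> eigsp pr a 0 \<and>
            v4 \<in> eigsp pr a (1/4) \<and> v32 \<in> eigsp pr a (1/32) \<and> v = v1 + v0 + v4 + v32) t"
    by (rule ex1_implies_ex)
  then obtain x y z m where "x \<in> eigsp pr a 1 \<and> y \<in> eigsp pr a 0 \<and>
            z \<in> eigsp pr a (1/4) \<and> m \<in> eigsp pr a (1/32) \<and> v = x + y + z + m"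
    by auto
  then show ?thesis using that by blast
qed

lemma vplus_closed:
  assumes "M4 pr a" "bilinear pr"
    and m6: "\<forall>u v. tau_map pr a (pr u v) = pr (tau_map pr a u) (tau_map pr a v)"
    and "u \<in> Vplus pr a" "v \<in> Vplus pr a"
  shows "pr u v \<in> Vplus pr a"
proof -
  have fix1: "tau_map pr a p = p" if "p \<in> Vplus pr a" for p
  proof -
    from that obtain x y z where h: "x \<in> eigsp pr a 1" "y \<in> eigsp pr a 0" "z \<in> eigsp pr a (1/4)" "p = x + y + z"
      unfolding Vplus_def by auto
    have "tau_map pr a (x + y + z + 0) = x + y + z - 0"
      by (rule tau_char[OF assms(1,2) h(1-3) zero_eig[OF assms(2)]])
    then show ?thesis using h(4) by simp
  qed
  obtain x y z m where h: "x \<in> eigsp pr a 1" "y \<in> eigsp pr a 0" "z \<in> eigsp pr a (1/4)"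
    "m \<in> eigsp pr a (1/32)" "pr u v = x + y + z + m"
    using m4_exists[OF assms(1)] by metis
  have "tau_map pr a (pr u v) = pr u v" using m6 fix1 assms(4,5) by simp
  moreover have "tau_map pr a (pr u v) = x + y + z - m" using tau_char[OF assms(1,2) h(1-4)] h(5) by simp
  ultimately have "x + y + z - m = x + y + z + m" using h(5) by simp
  then have "m = 0" by (metis add_left_cancel diff_conv_add_uminus neg_equal_iff_equal equation_minus_iff add.inverse_neutral
      scaleR_2 scaleR_eq_0_iff zero_neq_numeral add_uminus_conv_diff eq_neg_iff_add_eq_0)
  then show ?thesis using h unfolding Vplus_def by auto
qed

locale invol =
  fixes pr :: "'v::real_vector \<Rightarrow> 'v \<Rightarrow> 'v" and f :: "'v \<Rightarrow> 'v"
  assumes lin: "linear f" and inv: "\<And>v. f (f v) = v"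
    and mul: "\<And>u v. f (pr u v) = pr (f u) (f v)" and bil: "bilinear pr"
begin

lemma f_add: "f (x + y) = f x + f y" using lin by (simp add: linear_add)
lemma f_diff: "f (x - y) = f x - f y" using lin by (simp add: linear_diff)
lemma f_scale: "f (c *\<^sub>R x) = c *\<^sub>R f x" using lin by (simp add: linear_scale)
lemma f_0: "f 0 = 0" using lin by (simp add: linear_0)
lemma f_inj: "f x = f y \<longleftrightarrow> x = y" by (metis inv)

lemma eig: "v \<in> eigsp pr (f b) \<mu> \<longleftrightarrow> f v \<in> eigsp pr b \<mu>"
proof -
  have "pr (f b) v = \<mu> *\<^sub>R v \<longleftrightarrow> f (pr (f b) v) = f (\<mu> *\<^sub>R v)" by (simp add: f_inj)
  also have "\<dots> \<longleftrightarrow> pr b (f v) = \<mu> *\<^sub>R f v" by (simp add: mul inv f_scale)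
  finally show ?thesis by (simp add: eigsp_def)
qed

lemma eig': "w \<in> eigsp pr b \<mu> \<Longrightarrow> f w \<in> eigsp pr (f b) \<mu>"
  by (simp add: eig inv)

lemma vplus_map: "u \<in> Vplus pr b \<Longrightarrow> f u \<in> Vplus pr (f b)"
proof -
  assume "u \<in> Vplus pr b"
  then obtain x y z where h: "x \<in> eigsp pr b 1" "y \<in> eigsp pr b 0" "z \<in> eigsp pr b (1/4)"
    "u = x + y + z" unfolding Vplus_def by auto
  have "f u = f x + f y + f z" using h(4) by (simp add: f_add)
  then show ?thesis unfolding Vplus_def using eig'[OF h(1)] eig'[OF h(2)] eig'[OF h(3)] by blast
qed

lemma M4_map: assumes "M4 pr a" shows "M4 pr (f a)"
  unfolding M4_def
proof
  fix v
  obtain x y z m where h: "x \<in> eigsp pr a 1" "y \<in> eigsp pr a 0" "z \<in> eigsp pr a (1/4)"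
    "m \<in> eigsp pr a (1/32)" "f v = x + y + z + m"
    using m4_exists[OF assms] by metis
  show "\<exists>!(v1, v0, v4, v32). v1 \<in> eigsp pr (f a) 1 \<and> v0 \<in> eigsp pr (f a) 0 \<and>
            v4 \<in> eigsp pr (f a) (1/4) \<and> v32 \<in> eigsp pr (f a) (1/32) \<and> v = v1 + v0 + v4 + v32"
  proof (rule ex1I[of _ "(f x, f y, f z, f m)"])
    have "v = f x + f y + f z + f m" using arg_cong[OF h(5), of f] by (simp add: inv f_add)
    then show "(\<lambda>(v1, v0, v4, v32). v1 \<in> eigsp pr (f a) 1 \<and> v0 \<in> eigsp pr (f a) 0 \<and>
            v4 \<in> eigsp pr (f a) (1/4) \<and> v32 \<in> eigsp pr (f a) (1/32) \<and> v = v1 + v0 + v4 + v32) (f x, f y, f z, f m)"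
      using h by (simp add: eig')
  next
    fix t assume "(\<lambda>(v1, v0, v4, v32). v1 \<in> eigsp pr (f a) 1 \<and> v0 \<in> eigsp pr (f a) 0 \<and>
            v4 \<in> eigsp pr (f a) (1/4) \<and> v32 \<in> eigsp pr (f a) (1/32) \<and> v = v1 + v0 + v4 + v32) t"
    then obtain w1 w0 w4 w32 where t: "t = (w1, w0, w4, w32)" and
      g: "w1 \<in> eigsp pr (f a) 1" "w0 \<in> eigsp pr (f a) 0" "w4 \<in> eigsp pr (f a) (1/4)" "w32 \<in> eigsp pr (f a) (1/32)"
      "v = w1 + w0 + w4 + w32"
      by (cases t) auto
    have g': "f w1 \<in> eigsp pr a 1" "f w0 \<in> eigsp pr a 0" "f w4 \<in> eigsp pr a (1/4)" "f w32 \<in> eigsp pr a (1/32)"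
      using g(1-4) by (simp_all add: eig)
    have "f w1 + f w0 + f w4 + f w32 = x + y + z + m" using g(5) h(5) by (simp add: f_add)
    from m4_unique[OF assms g' h(1-4) this] show "t = (f x, f y, f z, f m)"
      by (auto simp: t inv)
  qed
qed

lemma tau_rel:
  assumes "M4 pr a"
  shows "tau_map pr (f a) w = f (tau_map pr a (f w))"
proof -
  obtain x y z m where h: "x \<in> eigsp pr a 1" "y \<in> eigsp pr a 0" "z \<in> eigsp pr a (1/4)"
    "m \<in> eigsp pr a (1/32)" "f w = x + y + z + m"
    using m4_exists[OF assms] by metis
  have w: "w = f x + f y + f z + f m" using arg_cong[OF h(5), of f] by (simp add: inv f_add)
  have "tau_map pr (f a) w = f x + f y + f z - f m"
    unfolding w by (rule tau_char[OF M4_map[OF assms] bil eig'[OF h(1)] eig'[OF h(2)] eig'[OF h(3)] eig'[OF h(4)]])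
  moreover have "tau_map pr a (f w) = x + y + z - m" unfolding h(5) by (rule tau_char[OF assms bil h(1-4)])
  ultimately show ?thesis by (simp add: f_add f_diff)
qed

lemma sigma_rel:
  assumes "M4 pr a" "f w \<in> Vplus pr a"
  shows "sigma_map pr (f a) w = f (sigma_map pr a (f w))"
proof -
  obtain x y z where h: "x \<in> eigsp pr a 1" "y \<in> eigsp pr a 0" "z \<in> eigsp pr a (1/4)"
    "f w = x + y + z" using assms(2) unfolding Vplus_def by auto
  have w: "w = f x + f y + f z" using arg_cong[OF h(4), of f] by (simp add: inv f_add)
  have "sigma_map pr (f a) w = f x + f y - f z"
    unfolding w by (rule sigma_char[OF M4_map[OF assms(1)] bil eig'[OF h(1)] eig'[OF h(2)] eig'[OF h(3)]])
  moreover have "sigma_map pr a (f w) = x + y - z" unfolding h(4) by (rule sigma_char[OF assms(1) bil h(1-3)])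
  ultimately show ?thesis by (simp add: f_add f_diff)
qed

lemma transport:
  assumes ipa: "ip (f a) (f a) = ip a a" and ax: "majorana_axis ip pr a"
  shows "majorana_axis ip pr (f a)"
proof -
  from ax[unfolded majorana_axis_iff] have
    a0: "a \<noteq> 0" and a1: "ip a a = 1" and a2: "pr a a = a" and m4: "M4 pr a"
    and m5: "eigsp pr a 1 = range (\<lambda>c. c *\<^sub>R a)"
    and m6: "\<forall>u v. tau_map pr a (pr u v) = pr (tau_map pr a u) (tau_map pr a v)"
    and m7: "\<forall>u\<in>Vplus pr a. \<forall>v\<in>Vplus pr a.
        sigma_map pr a (pr u v) = pr (sigma_map pr a u) (sigma_map pr a v)"
    by blast+
  have "f a \<noteq> 0" using a0 f_0 inv by metis
  moreover have "ip (f a) (f a) = 1" using ipa a1 by simp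
  moreover have "pr (f a) (f a) = f a" using a2 mul by metis
  moreover have "M4 pr (f a)" by (rule M4_map[OF m4])
  moreover have "eigsp pr (f a) 1 = range (\<lambda>c. c *\<^sub>R f a)"
  proof -
    have "v \<in> eigsp pr (f a) 1 \<longleftrightarrow> v \<in> range (\<lambda>c. c *\<^sub>R f a)" for v
    proof -
      have "v \<in> eigsp pr (f a) 1 \<longleftrightarrow> (\<exists>c. f v = c *\<^sub>R a)" by (simp add: eig m5 image_iff eq_commute)
      also have "\<dots> \<longleftrightarrow> (\<exists>c. v = c *\<^sub>R f a)" by (metis inv f_scale)
      finally show ?thesis by (auto simp: image_iff)
    qed
    then show ?thesis by blast
  qed
  moreover have "\<forall>u v. tau_map pr (f a) (pr u v) = pr (tau_map pr (f a) u) (tau_map pr (f a) v)"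
    using m6 by (simp add: tau_rel[OF m4] mul)
  moreover have "\<forall>u\<in>Vplus pr (f a). \<forall>v\<in>Vplus pr (f a).
        sigma_map pr (f a) (pr u v) = pr (sigma_map pr (f a) u) (sigma_map pr (f a) v)"
  proof (intro ballI)
    fix u v assume u: "u \<in> Vplus pr (f a)" and v: "v \<in> Vplus pr (f a)"
    have fu: "f u \<in> Vplus pr a" using vplus_map[OF u] by (simp add: inv)
    have fv: "f v \<in> Vplus pr a" using vplus_map[OF v] by (simp add: inv)
    have fuv: "f (pr u v) \<in> Vplus pr a" unfolding mul by (rule vplus_closed[OF m4 bil m6 fu fv])
    show "sigma_map pr (f a) (pr u v) = pr (sigma_map pr (f a) u) (sigma_map pr (f a) v)"
      using m7 fu fv by (simp add: sigma_rel[OF m4 fuv] sigma_rel[OF m4 fu] sigma_rel[OF m4 fv] mul)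
  qed
  ultimately show ?thesis unfolding majorana_axis_iff by blast
qed

end


lemma neg_self: "(x::'a::real_vector) = - x \<Longrightarrow> x = 0"
proof -
  assume "x = - x"
  then have "x + x = 0" by (metis add.right_inverse)
  then have "2 *\<^sub>R x = 0" by (simp add: scaleR_2)
  then show ?thesis by simp
qed

lemma eig_add: "bilinear pr \<Longrightarrow> x \<in> eigsp pr a \<mu> \<Longrightarrow> y \<in> eigsp pr a \<mu> \<Longrightarrow> x + y \<in> eigsp pr a \<mu>"
  by (simp add: eigsp_def bilinear_radd scaleR_add_right)
lemma eig_scale: "bilinear pr \<Longrightarrow> x \<in> eigsp pr a \<mu> \<Longrightarrow> c *\<^sub>R x \<in> eigsp pr a \<mu>"
  by (simp add: eigsp_def bilinear_rmul)

lemma orth: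
  fixes ip :: "'v::real_vector \<Rightarrow> 'v \<Rightarrow> real"
  assumes "bilinear ip" "\<forall>u v. pr u v = pr v u" "\<forall>u v w. ip u (pr v w) = ip (pr u v) w"
    and "bilinear pr" "x \<in> eigsp pr a l" "z \<in> eigsp pr a \<mu>" "l \<noteq> \<mu>"
  shows "ip x z = 0"
proof -
  have "l * ip x z = ip (pr a x) z" using assms(5) by (simp add: eigsp_def bilinear_lmul[OF assms(1)])
  also have "\<dots> = ip (pr x a) z" using assms(2)[rule_format, of a x] by simp
  also have "\<dots> = ip x (pr a z)" using assms(3)[rule_format, of x a z] by simp
  also have "\<dots> = \<mu> * ip x z" using assms(6) by (simp add: eigsp_def bilinear_rmul[OF assms(1)])
  finally have "(l - \<mu>) * ip x z = 0" by (simp add: algebra_simps)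
  then show ?thesis using assms(7) by simp
qed

lemma ip_pm:
  fixes ip :: "'v::real_vector \<Rightarrow> 'v \<Rightarrow> real"
  shows "bilinear ip \<Longrightarrow> ip p q = 0 \<Longrightarrow> ip q p = 0 \<Longrightarrow> ip (p - q) (p - q) = ip (p + q) (p + q)"
  by (simp add: bilinear_ladd bilinear_radd bilinear_lsub bilinear_rsub)

theorem mainTheorem2:
  fixes ip :: "'v::real_vector \<Rightarrow> 'v \<Rightarrow> real"
    and pr :: "'v \<Rightarrow> 'v \<Rightarrow> 'v"
    and A :: "'v set" and a0 a1 ar :: 'v
  assumes "majorana_algebra ip pr A"
    and "a0 \<in> A" and "a1 \<in> A"
    and "\<forall>v. tau_map pr a0 v = v"
    and "type_2A ip pr a0 a1 ar"
  shows "majorana_axis ip pr ar"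
proof -
  have sp: "majorana_space ip pr" and ax0: "majorana_axis ip pr a0" and ax1: "majorana_axis ip pr a1"
    using assms(1-3) unfolding majorana_algebra_def by blast+
  from sp have bip: "bilinear ip" and sym: "\<forall>u v. ip u v = ip v u" and bil: "bilinear pr"
    and com: "\<forall>u v. pr u v = pr v u" and m1: "\<forall>u v w. ip u (pr v w) = ip (pr u v) w"
    unfolding majorana_space_def by blast+
  from ax0[unfolded majorana_axis_iff] have m4: "M4 pr a0" and aa: "pr a0 a0 = a0"
    and m7: "\<forall>u\<in>Vplus pr a0. \<forall>v\<in>Vplus pr a0.
        sigma_map pr a0 (pr u v) = pr (sigma_map pr a0 u) (sigma_map pr a0 v)" by blast+
  from ax1[unfolded majorana_axis_iff] have a11: "ip a1 a1 = 1" by blast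
  from assms(5) have t1: "pr a0 a1 = (1/8) *\<^sub>R (a0 + a1 - ar)" and t2: "pr a0 ar = (1/8) *\<^sub>R (a0 + ar - a1)"
    unfolding type_2A_def by blast+
  have lin0: "linear (pr a0)" using bil unfolding bilinear_def by blast
  have v32: "m = 0" if "m \<in> eigsp pr a0 (1/32)" for m
  proof -
    have "tau_map pr a0 (0 + 0 + 0 + m) = 0 + 0 + 0 - m"
      by (rule tau_char[OF m4 bil zero_eig[OF bil] zero_eig[OF bil] zero_eig[OF bil] that])
    then have "m = - m" using assms(4) by simp
    then show ?thesis by (rule neg_self)
  qed
  have dec: "\<exists>x y z. x \<in> eigsp pr a0 1 \<and> y \<in> eigsp pr a0 0 \<and> z \<in> eigsp pr a0 (1/4) \<and> v = x + y + z" for v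
  proof -
    obtain x y z m where h: "x \<in> eigsp pr a0 1" "y \<in> eigsp pr a0 0" "z \<in> eigsp pr a0 (1/4)"
      "m \<in> eigsp pr a0 (1/32)" "v = x + y + z + m"
      using m4_exists[OF m4] by metis
    then show ?thesis using v32[OF h(4)] by auto
  qed
  then have vp: "v \<in> Vplus pr a0" for v unfolding Vplus_def by blast
  define s where "s = sigma_map pr a0"
  have sc: "s (x + y + z) = x + y - z" if "x \<in> eigsp pr a0 1" "y \<in> eigsp pr a0 0" "z \<in> eigsp pr a0 (1/4)" for x y z
    unfolding s_def by (rule sigma_char[OF m4 bil that])
  have lin_s: "linear s"
    proof (rule linearI)
      fix u v
      obtain x y z where h: "x \<in> eigsp pr a0 1" "y \<in> eigsp pr a0 0" "z \<in> eigsp pr a0 (1/4)" "u = x + y + z" using dec by blast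
      obtain x' y' z' where h': "x' \<in> eigsp pr a0 1" "y' \<in> eigsp pr a0 0" "z' \<in> eigsp pr a0 (1/4)" "v = x' + y' + z'" using dec by blast
      have "u + v = (x + x') + (y + y') + (z + z')" using h(4) h'(4) by (simp add: add_ac)
      then have e1: "s (u + v) = (x + x') + (y + y') - (z + z')"
        using sc[OF eig_add[OF bil h(1) h'(1)] eig_add[OF bil h(2) h'(2)] eig_add[OF bil h(3) h'(3)]] by simp
      have e2: "s u = x + y - z" using sc[OF h(1-3)] h(4) by simp
      have e3: "s v = x' + y' - z'" using sc[OF h'(1-3)] h'(4) by simp
      show "s (u + v) = s u + s v" unfolding e1 e2 e3 by (simp add: algebra_simps)
    next
      fix c u
      obtain x y z where h: "x \<in> eigsp pr a0 1" "y \<in> eigsp pr a0 0" "z \<in> eigsp pr a0 (1/4)" "u = x + y + z" using dec by blast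
      have "c *\<^sub>R u = c *\<^sub>R x + c *\<^sub>R y + c *\<^sub>R z" using h(4) by (simp add: scaleR_add_right)
      then have "s (c *\<^sub>R u) = c *\<^sub>R x + c *\<^sub>R y - c *\<^sub>R z"
        using sc[OF eig_scale[OF bil h(1)] eig_scale[OF bil h(2)] eig_scale[OF bil h(3)]] by simp
      then show "s (c *\<^sub>R u) = c *\<^sub>R s u" using sc[OF h(1-3)] h(4) by (simp add: scaleR_add_right scaleR_diff_right)
    qed
  have inv_s: "s (s v) = v" for v
  proof -
    obtain x y z where h: "x \<in> eigsp pr a0 1" "y \<in> eigsp pr a0 0" "z \<in> eigsp pr a0 (1/4)" "v = x + y + z" using dec by blast
    have mz: "(-1) *\<^sub>R z \<in> eigsp pr a0 (1/4)" by (rule eig_scale[OF bil h(3)])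
    have "s v = x + y + (-1) *\<^sub>R z" using sc[OF h(1-3)] h(4) by simp
    then have "s (s v) = x + y - (-1) *\<^sub>R z" using sc[OF h(1,2) mz] by simp
    then show "s (s v) = v" using h(4) by simp
  qed
  have mul_s: "s (pr u v) = pr (s u) (s v)" for u v using m7 vp unfolding s_def by blast
  interpret invol pr s by (rule invol.intro[OF lin_s inv_s mul_s bil])
  define x where "x = (1/8) *\<^sub>R a0"
  define y where "y = (1/2) *\<^sub>R a1 + (1/2) *\<^sub>R ar - (1/8) *\<^sub>R a0"
  define z where "z = (1/2) *\<^sub>R a1 - (1/2) *\<^sub>R ar"
  have hx: "x \<in> eigsp pr a0 1" unfolding x_def eigsp_def using aa by (simp add: linear_scale[OF lin0])
  have pa: "pr a0 (c *\<^sub>R u + d *\<^sub>R w) = c *\<^sub>R pr a0 u + d *\<^sub>R pr a0 w" for c d u w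
    by (simp add: linear_add[OF lin0] linear_scale[OF lin0])
  have pb: "pr a0 (u - w) = pr a0 u - pr a0 w" for u w by (simp add: linear_diff[OF lin0])
  have k1: "(a0 + a1 - ar) + (a0 + ar - a1) = 2 *\<^sub>R a0" by (simp add: algebra_simps scaleR_2)
  have k2: "(a0 + a1 - ar) - (a0 + ar - a1) = 2 *\<^sub>R (a1 - ar)" by (simp add: algebra_simps scaleR_2)
  have hy: "y \<in> eigsp pr a0 0"
  proof -
    have "pr a0 y = (1/2) *\<^sub>R pr a0 a1 + (1/2) *\<^sub>R pr a0 ar - pr a0 ((1/8) *\<^sub>R a0)"
      unfolding y_def pb pa ..
    also have "\<dots> = (1/16) *\<^sub>R ((a0 + a1 - ar) + (a0 + ar - a1)) - (1/8) *\<^sub>R a0"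
      unfolding t1 t2 by (simp add: linear_scale[OF lin0] aa flip: scaleR_add_right)
    also have "\<dots> = 0" unfolding k1 by simp
    finally show ?thesis unfolding eigsp_def by simp
  qed
  have hz: "z \<in> eigsp pr a0 (1/4)"
  proof -
    have "pr a0 z = (1/2) *\<^sub>R pr a0 a1 - (1/2) *\<^sub>R pr a0 ar"
      unfolding z_def pb by (simp add: linear_scale[OF lin0])
    also have "\<dots> = (1/16) *\<^sub>R ((a0 + a1 - ar) - (a0 + ar - a1))"
      unfolding t1 t2 by (simp flip: scaleR_diff_right)
    also have "\<dots> = (1/4) *\<^sub>R z" unfolding k2 z_def by (simp add: scaleR_diff_right)
    finally show ?thesis unfolding eigsp_def by simp
  qed
  have a1d: "a1 = x + y + z"
  proof -
    have "a1 = (1/2) *\<^sub>R a1 + (1/2) *\<^sub>R a1" by (simp flip: scaleR_add_left)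
    also have "\<dots> = x + y + z" unfolding x_def y_def z_def by (simp add: algebra_simps)
    finally show ?thesis .
  qed
  have sa0: "s a1 = x + y - z" using a1d sc[OF hx hy hz] by simp
  have sa1: "s a1 = ar"
  proof -
    have "ar = (1/2) *\<^sub>R ar + (1/2) *\<^sub>R ar" by (simp flip: scaleR_add_left)
    also have "\<dots> = x + y - z" unfolding x_def y_def z_def by (simp add: algebra_simps)
    finally show ?thesis using sa0 by simp
  qed
  have o1: "ip x z = 0" by (rule orth[OF bip com m1 bil hx hz]) simp
  have o2: "ip y z = 0" by (rule orth[OF bip com m1 bil hy hz]) simp
  have pq: "ip (x + y) z = 0" using o1 o2 by (simp add: bilinear_ladd[OF bip])
  have qp: "ip z (x + y) = 0" using pq sym[rule_format, of z "x + y"] by simp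
  have "ip (s a1) (s a1) = ip a1 a1"
    using ip_pm[OF bip pq qp] sa0 a1d by simp
  from transport[OF this ax1] show ?thesis using sa1 by simp
qed

end
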